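(* Let $\theta\in\mathrm{Irr}(N)$, let $N\le L\le\mathrm{Stab}_G(\tilde\theta)$ and $N\le K\le\mathrm{Stab}_G(\theta)$ with $L$ normalising $K$, and let $\hat\theta$ be a strong extension of $\theta$ to $K$. Let $g\in L$ and suppose $\psi_g,\psi'_g\in\mathrm{Lin}(G)$ both satisfy ${}^g\theta=\theta\psi_g|_N=\theta\psi'_g|_N$, and that $\mu,\mu'\in F_K$ satisfy ${}^g\hat\theta=\hat\theta\,\psi_g|_K\,\mu=\hat\theta\,\psi'_g|_K\,\mu'$. Then $\mu\Gamma_{K,\tilde\theta}=\mu'\Gamma_{K,\tilde\theta}$; that is, the coset $\mu(gN)\Gamma_{K,\tilde\theta}$ is independent of the choice of $\psi_g|_K$.
   Context: $G$ is a profinite group, $N$ an open normal subgroup; $\mathrm{Irr}$, $\mathrm{Lin}$ denote continuous irreducible, resp. degree-one, complex characters; $\tilde\theta=\{\theta\psi|_N:\psi\in\mathrm{Lin}(G)\}$ is the $G$-twist class of $\theta$, with $G$ acting by conjugation ${}^g\theta(n)=\theta(g^{-1}ng)$. A projective representation of $K$ is $\Pi:K\to\mathrm{GL}_m(\mathbb{C})$ with $\Pi(x)\Pi(y)=\alpha(x,y)\Pi(xy)$ ($\alpha$ the factor set); its projective character is $\mathrm{Tr}\circ\Pi$. A strong extension of $\theta$ to $K$ (with $K$ fixing $\theta$) is the projective character of a projective representation $\Pi$ of $K$ with $\Pi(xn)=\Pi(x)\Theta(n)$, $\Pi(nx)=\Theta(n)\Pi(x)$ ($x\in K,n\in N$)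 for a representation $\Theta$ affording $\theta$. $F_K$ is the group of functions $K/N\to\mathbb{C}^\times$ (viewed as functions on $K$ constant on $N$-cosets) under pointwise multiplication; ${}^gf(x)=f(g^{-1}xg)$. $\mathrm{Lin}(K/N)$ is the set of degree-one characters of $K$ trivial on $N$, and $\Gamma_{K,\tilde\theta}=\{\nu\in\mathrm{Lin}(K/N):\hat\theta\,\varepsilon|_K=\hat\theta\,\nu\text{ for some }\varepsilon\in\mathrm{Lin}(G)\}$ (independent of the choice of $\theta\in\tilde\theta$ and of $\hat\theta$). *)

theory Defs
  imports "HOL-Analysis.Analysis" "HOL-Algebra.Group" "HOL-Algebra.Coset"
begin

definition profinite_group :: "('g, 'b) monoid_scheme \<Rightarrow> 'g topology \<Rightarrow> bool" where
  "profinite_group G T \<longleftrightarrow>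
     group G \<and> topspace T = carrier G \<and>
     continuous_map (prod_topology T T) T (\<lambda>(x, y). x \<otimes>\<^bsub>G\<^esub> y) \<and>
     continuous_map T T (\<lambda>x. inv\<^bsub>G\<^esub> x) \<and>
     compact_space T \<and> Hausdorff_space T \<and>
     (\<forall>x \<in> topspace T. connected_component_of_set T x = {x})"

definition cont_rep :: "('g, 'b) monoid_scheme \<Rightarrow> 'g topology \<Rightarrow> 'g set
                         \<Rightarrow> ('g \<Rightarrow> complex^'m^'m) \<Rightarrow> bool" where
  "cont_rep G T H \<Theta> \<longleftrightarrow>
     (\<forall>x \<in> H. invertible (\<Theta> x)) \<and>
     (\<forall>x \<in> H. \<forall>y \<in> H. \<Theta> (x \<otimes>\<^bsub>G\<^esub> y) = \<Theta> x ** \<Theta> y) \<and>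
     continuous_map (subtopology T H) euclidean \<Theta>"

definition invariant_subspace :: "'g set \<Rightarrow> ('g \<Rightarrow> complex^'m^'m) \<Rightarrow> (complex^'m) set \<Rightarrow> bool" where
  "invariant_subspace H \<Theta> W \<longleftrightarrow>
     0 \<in> W \<and> (\<forall>v \<in> W. \<forall>w \<in> W. v + w \<in> W) \<and> (\<forall>c. \<forall>v \<in> W. c *s v \<in> W) \<and>
     (\<forall>x \<in> H. \<forall>v \<in> W. \<Theta> x *v v \<in> W)"

definition irreducible_rep :: "'g set \<Rightarrow> ('g \<Rightarrow> complex^'m^'m) \<Rightarrow> bool" where
  "irreducible_rep H \<Theta> \<longleftrightarrow>
     (\<forall>W. invariant_subspace H \<Theta> W \<longrightarrow> W = {0} \<or> W = UNIV)"

definition affords :: "'g set \<Rightarrow> ('g \<Rightarrow> complex^'m^'m) \<Rightarrow> ('g \<Rightarrow> complex) \<Rightarrow> bool" where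
  "affords H \<Theta> \<theta> \<longleftrightarrow> (\<forall>x \<in> H. \<theta> x = trace (\<Theta> x))"

definition irr_char :: "('g, 'b) monoid_scheme \<Rightarrow> 'g topology \<Rightarrow> 'g set
                         \<Rightarrow> ('m::finite) itself \<Rightarrow> ('g \<Rightarrow> complex) \<Rightarrow> bool" where
  "irr_char G T H (_::'m itself) \<theta> \<longleftrightarrow>
     (\<exists>\<Theta> :: 'g \<Rightarrow> complex^'m^'m. cont_rep G T H \<Theta> \<and> irreducible_rep H \<Theta> \<and> affords H \<Theta> \<theta>)"

definition lin_char :: "('g, 'b) monoid_scheme \<Rightarrow> 'g topology \<Rightarrow> 'g set \<Rightarrow> ('g \<Rightarrow> complex) \<Rightarrow> bool" where
  "lin_char G T H \<psi> \<longleftrightarrow>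
     (\<forall>x \<in> H. \<psi> x \<noteq> 0) \<and>
     (\<forall>x \<in> H. \<forall>y \<in> H. \<psi> (x \<otimes>\<^bsub>G\<^esub> y) = \<psi> x * \<psi> y) \<and>
     continuous_map (subtopology T H) euclidean \<psi>"

(* \<nu> \<in> Lin(K/N): degree-one characters of K trivial on N *)
definition lin_char_quot :: "('g, 'b) monoid_scheme \<Rightarrow> 'g topology \<Rightarrow> 'g set \<Rightarrow> 'g set
                              \<Rightarrow> ('g \<Rightarrow> complex) \<Rightarrow> bool" where
  "lin_char_quot G T K N \<nu> \<longleftrightarrow> lin_char G T K \<nu> \<and> (\<forall>n \<in> N. \<nu> n = 1)"

definition conj_fun :: "('g, 'b) monoid_scheme \<Rightarrow> 'g \<Rightarrow> ('g \<Rightarrow> 'c) \<Rightarrow> 'g \<Rightarrow> 'c" where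
  "conj_fun G g f = (\<lambda>x. f (inv\<^bsub>G\<^esub> g \<otimes>\<^bsub>G\<^esub> x \<otimes>\<^bsub>G\<^esub> g))"

definition stab_char :: "('g, 'b) monoid_scheme \<Rightarrow> 'g set \<Rightarrow> ('g \<Rightarrow> complex) \<Rightarrow> 'g set" where
  "stab_char G N \<theta> = {g \<in> carrier G. \<forall>n \<in> N. conj_fun G g \<theta> n = \<theta> n}"

(* Stab_G(\<theta>~), \<theta>~ = { \<theta> \<psi>|_N : \<psi> \<in> Lin(G) } *)
definition stab_twist :: "('g, 'b) monoid_scheme \<Rightarrow> 'g topology \<Rightarrow> 'g set \<Rightarrow> ('g \<Rightarrow> complex) \<Rightarrow> 'g set" where
  "stab_twist G T N \<theta> = {g \<in> carrier G. \<exists>\<psi>. lin_char G T (carrier G) \<psi> \<and>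
                              (\<forall>n \<in> N. conj_fun G g \<theta> n = \<theta> n * \<psi> n)}"

definition proj_rep :: "('g, 'b) monoid_scheme \<Rightarrow> 'g set \<Rightarrow> ('g \<Rightarrow> complex^'m^'m)
                         \<Rightarrow> ('g \<Rightarrow> 'g \<Rightarrow> complex) \<Rightarrow> bool" where
  "proj_rep G K Pr \<alpha> \<longleftrightarrow>
     (\<forall>x \<in> K. invertible (Pr x)) \<and>
     (\<forall>x \<in> K. \<forall>y \<in> K. \<alpha> x y \<noteq> 0 \<and> Pr x ** Pr y = mat (\<alpha> x y) ** Pr (x \<otimes>\<^bsub>G\<^esub> y))"

definition strong_ext :: "('g, 'b) monoid_scheme \<Rightarrow> 'g topology \<Rightarrow> 'g set \<Rightarrow> 'g set
                           \<Rightarrow> ('m::finite) itself \<Rightarrow> ('g \<Rightarrow> complex) \<Rightarrow> ('g \<Rightarrow> complex) \<Rightarrow> bool" where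
  "strong_ext G T N K (_::'m itself) \<theta> \<theta>h \<longleftrightarrow>
     (\<exists>(\<Theta> :: 'g \<Rightarrow> complex^'m^'m) (Pr :: 'g \<Rightarrow> complex^'m^'m) \<alpha>.
        cont_rep G T N \<Theta> \<and> affords N \<Theta> \<theta> \<and> proj_rep G K Pr \<alpha> \<and>
        (\<forall>x \<in> K. \<forall>n \<in> N. Pr (x \<otimes>\<^bsub>G\<^esub> n) = Pr x ** \<Theta> n \<and>
                          Pr (n \<otimes>\<^bsub>G\<^esub> x) = \<Theta> n ** Pr x) \<and>
        (\<forall>x \<in> K. \<theta>h x = trace (Pr x)))"

definition F_fun :: "('g, 'b) monoid_scheme \<Rightarrow> 'g set \<Rightarrow> 'g set \<Rightarrow> ('g \<Rightarrow> complex) \<Rightarrow> bool" where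
  "F_fun G K N \<mu> \<longleftrightarrow> (\<forall>x \<in> K. \<mu> x \<noteq> 0) \<and> (\<forall>x \<in> K. \<forall>n \<in> N. \<mu> (x \<otimes>\<^bsub>G\<^esub> n) = \<mu> x)"

(* \<Gamma>_{K,\<theta>~}, defined via the strong extension \<hat>\<theta> *)
definition Gamma :: "('g, 'b) monoid_scheme \<Rightarrow> 'g topology \<Rightarrow> 'g set \<Rightarrow> 'g set
                      \<Rightarrow> ('g \<Rightarrow> complex) \<Rightarrow> ('g \<Rightarrow> complex) set" where
  "Gamma G T K N \<theta>h = {\<nu>. lin_char_quot G T K N \<nu> \<and>
       (\<exists>\<epsilon>. lin_char G T (carrier G) \<epsilon> \<and> (\<forall>x \<in> K. \<theta>h x * \<epsilon> x = \<theta>h x * \<nu> x))}"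

end

theory Submission
  imports Defs "HOL-Computational_Algebra.Fundamental_Theorem_Algebra"
begin
fun hornerV :: "complex^'m^'m \<Rightarrow> complex^'m \<Rightarrow> complex list \<Rightarrow> complex^'m" where
  "hornerV M v [] = 0"
| "hornerV M v (a # as) = a *s v + M *v hornerV M v as"

definition polyV :: "complex^'m^'m \<Rightarrow> complex^'m \<Rightarrow> complex poly \<Rightarrow> complex^'m" where
  "polyV M v p = hornerV M v (coeffs p)"

lemma polyV_0[simp]: "polyV M v 0 = 0"
  by (simp add: polyV_def)

lemma polyV_pCons[simp]: "polyV M v (pCons a p) = a *s v + M *v polyV M v p"
  by (cases "a = 0 \<and> p = 0") (auto simp: polyV_def cCons_def)

lemma mv_smult: "(M::'a::comm_ring_1^'n^'m) *v (c *s x) = c *s (M *v x)"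
  by (simp add: vec_eq_iff matrix_vector_mult_def sum_distrib_left mult_ac)

lemma polyV_add: "polyV M v (p + q) = polyV M v p + polyV M v q"
  by (induction p q rule: poly_induct2)
     (simp_all add: matrix_vector_right_distrib vector_sadd_rdistrib algebra_simps)

lemma polyV_smult: "polyV M v (smult c p) = c *s polyV M v p"
  by (induction p) (auto simp: matrix_vector_right_distrib vector_add_ldistrib mv_smult)

definition csub :: "('a::field^'n) set \<Rightarrow> bool" where
  "csub R \<longleftrightarrow> 0 \<in> R \<and> (\<forall>x\<in>R. \<forall>y\<in>R. x + y \<in> R) \<and> (\<forall>c. \<forall>x\<in>R. c *s x \<in> R)"

lemma polyV_in:
  assumes "csub R" "\<forall>x\<in>R. M *v x \<in> R" "v \<in> R"
  shows "polyV M v p \<in> R"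
  using assms by (induction p) (auto simp: csub_def)

lemma polyV_monom: "polyV M v (monom c k) = c *s (((*v) M) ^^ k) v"
  by (induction k) (simp_all add: monom_Suc mv_smult monom_0)

lemma polyV_sum: "polyV M v (sum f S) = (\<Sum>i\<in>S. polyV M v (f i))"
  by (induction S rule: infinite_finite_induct) (simp_all add: polyV_add)

lemma polyV_diff: "polyV M v (p - q) = polyV M v p - polyV M v q"
proof -
  have "p - q = p + smult (-1) q" by simp
  then have "polyV M v (p - q) = polyV M v p + (-1) *s polyV M v q"
    by (metis polyV_add polyV_smult)
  moreover have "(-1::complex) *s x = - x" for x :: "complex^'m" by (simp add: vec_eq_iff)
  ultimately show ?thesis by simp
qed

lemma eig_from_poly:
  assumes R: "csub R" and inv: "\<forall>x\<in>R. M *v x \<in> R" and vR: "v \<in> R" and v0: "v \<noteq> 0"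
  shows "p \<noteq> 0 \<Longrightarrow> polyV M v p = 0 \<Longrightarrow> \<exists>w\<in>R. w \<noteq> 0 \<and> (\<exists>l. M *v w = l *s w)"
proof (induction "degree p" arbitrary: p rule: less_induct)
  case less
  show ?case
  proof (cases "degree p = 0")
    case True
    then obtain c where p: "p = [:c:]" by (metis degree_eq_zeroE)
    with less.prems have "c \<noteq> 0" by auto
    moreover have "c *s v = 0" using less.prems p by simp
    ultimately show ?thesis using v0 by (simp add: vector_mul_eq_0)
  next
    case False
    then obtain r where r: "poly p r = 0"
      by (metis fundamental_theorem_of_algebra constant_degree False)
    define q where "q = synthetic_div p r"
    have pq: "p + smult r q = pCons 0 q"
      using synthetic_div_correct[of p r] r by (simp add: q_def)
    have "polyV M v (p + smult r q) = polyV M v (pCons 0 q)" using pq by simp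
    then have eq: "r *s polyV M v q = M *v polyV M v q"
      using less.prems by (simp add: polyV_add polyV_smult)
    show ?thesis
    proof (cases "polyV M v q = 0")
      case False
      then show ?thesis using eq polyV_in[OF R inv vR] by metis
    next
      case True
      have dq: "degree q < degree p" using False by (simp add: q_def degree_synthetic_div)
      have "q \<noteq> 0" using pq less.prems by auto
      then show ?thesis using less.hyps[OF dq] True by blast
    qed
  qed
qed

lemma eig_exists:
  fixes M :: "complex^'m^'m"
  assumes R: "csub R" and inv: "\<forall>x\<in>R. M *v x \<in> R" and nz: "R \<noteq> {0}"
  shows "\<exists>w\<in>R. w \<noteq> 0 \<and> (\<exists>l. M *v w = l *s w)"
proof -
  obtain v where vR: "v \<in> R" and v0: "v \<noteq> 0" using nz R csub_def by blast
  define f where "f k = (((*v) M) ^^ k) v" for k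
  define n where "n = CARD('m)"
  show ?thesis
  proof (cases "inj_on f {..n}")
    case False
    then obtain i j where ij: "i \<noteq> j" "f i = f j" by (auto simp: inj_on_def)
    define p where "p = monom (1::complex) i - monom 1 j"
    have "coeff p i = 1" using ij by (simp add: p_def coeff_monom)
    then have "p \<noteq> 0" by auto
    moreover have "polyV M v p = 0" using ij by (simp add: p_def polyV_diff polyV_monom f_def)
    ultimately show ?thesis using eig_from_poly[OF R inv vR v0] by blast
  next
    case True
    define S where "S = f ` {..n}"
    have cS: "card S = Suc n" using True by (simp add: S_def card_image)
    have fS: "finite S" by (simp add: S_def)
    have "vec.dependent S"
    proof (rule ccontr)
      assume "\<not> vec.dependent S"
      then have "card S \<le> vec.dim S" using vec.independent_bound_general by blast
      also have "\<dots> \<le> vec.dim (UNIV :: (complex^'m) set)" by (rule vec.dim_subset) simp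
      also have "\<dots> = n" by (metis n_def vec_dim_card)
      finally show False using cS by simp
    qed
    then obtain u where u: "\<exists>w\<in>S. u w \<noteq> 0" "(\<Sum>w\<in>S. u w *s w) = 0"
      using vec.dependent_finite[OF fS] by blast
    define p where "p = (\<Sum>k\<le>n. monom (u (f k)) k)"
    have "polyV M v p = (\<Sum>k\<le>n. u (f k) *s f k)"
      by (simp add: p_def polyV_sum polyV_monom f_def)
    also have "\<dots> = (\<Sum>w\<in>S. u w *s w)"
      unfolding S_def using sum.reindex[OF True, of "\<lambda>w. u w *s w"] by simp
    finally have pv: "polyV M v p = 0" using u by simp
    obtain k0 where k0: "k0 \<le> n" "u (f k0) \<noteq> 0" using u(1) by (auto simp: S_def)
    have "coeff p k0 = (\<Sum>k\<le>n. if k = k0 then u (f k) else 0)"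
      by (simp add: p_def coeff_sum coeff_monom)
    also have "\<dots> = u (f k0)" using k0 by (simp add: sum.delta)
    finally have "p \<noteq> 0" using k0 by auto
    then show ?thesis using eig_from_poly[OF R inv vR v0] pv by blast
  qed
qed

definition msc :: "complex \<Rightarrow> complex^'m^'n \<Rightarrow> complex^'m^'n" where
  "msc c X = (\<chi> i j. c * X$i$j)"

lemma msc_nth[simp]: "msc c X $ i $ j = c * X$i$j"
  by (simp add: msc_def)

lemma msc_mv[simp]: "msc c X *v v = c *s (X *v v)"
  by (simp add: vec_eq_iff matrix_vector_mult_def sum_distrib_left mult_ac)

lemma msc_mm1[simp]: "msc c X ** Y = msc c (X ** Y)"
  by (simp add: vec_eq_iff matrix_matrix_mult_def sum_distrib_left mult_ac)

lemma msc_mm2[simp]: "X ** msc c Y = msc c (X ** Y)"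
  by (simp add: vec_eq_iff matrix_matrix_mult_def sum_distrib_left mult_ac)

lemma msc_trace[simp]: "trace (msc c X) = c * trace X"
  by (simp add: trace_def sum_distrib_left)

lemma msc_add: "msc c (X + Y) = msc c X + msc c Y"
  by (simp add: vec_eq_iff algebra_simps)

lemma msc_add2: "msc (c + d) X = msc c X + msc d X"
  by (simp add: vec_eq_iff algebra_simps)

lemma msc_msc[simp]: "msc c (msc d X) = msc (c * d) X"
  by (simp add: vec_eq_iff)

lemma msc_1[simp]: "msc 1 X = X" and msc_0[simp]: "msc 0 X = 0" and msc_z[simp]: "msc c 0 = 0"
  by (simp_all add: vec_eq_iff)

lemma zero_if_mv_zero:
  fixes T :: "'a::comm_ring_1^'n^'m"
  assumes "\<And>z. T *v z = 0" shows "T = 0"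
proof -
  have "T $ i $ j = (T *v axis j 1) $ i" for i j
    by (simp add: matrix_vector_mult_def axis_def if_distrib cong: if_cong)
  then show ?thesis using assms by (simp add: vec_eq_iff)
qed

lemma mv_axis: "(T *v axis j 1) $ i = (T :: 'a::comm_ring_1^'n^'m) $ i $ j"
  by (simp add: matrix_vector_mult_def axis_def if_distrib cong: if_cong)

definition bdot :: "complex^'m \<Rightarrow> complex^'m \<Rightarrow> complex" where
  "bdot x y = (\<Sum>i\<in>UNIV. x$i * y$i)"

lemma bdot_vm: "bdot (w v* C) z = bdot w (C *v z)"
proof -
  have "bdot (w v* C) z = (\<Sum>i\<in>UNIV. \<Sum>k\<in>UNIV. w$k * C$k$i * z$i)"
    by (simp add: bdot_def vector_matrix_mult_def sum_distrib_right)
  also have "\<dots> = (\<Sum>k\<in>UNIV. \<Sum>i\<in>UNIV. w$k * C$k$i * z$i)" by (rule sum.swap)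
  also have "\<dots> = bdot w (C *v z)"
    by (simp add: bdot_def matrix_vector_mult_def sum_distrib_left mult.assoc)
  finally show ?thesis .
qed

lemma scaleR_eq_smult: "scaleR r (x :: complex^'m) = complex_of_real r *s x"
  by (simp add: vec_eq_iff) (simp add: scaleR_conv_of_real)

lemma annihilator:
  fixes W :: "(complex^'m) set"
  assumes W: "csub W" and ne: "W \<noteq> UNIV"
  shows "\<exists>z. z \<noteq> 0 \<and> (\<forall>y\<in>W. bdot y z = 0)"
proof -
  have sW: "subspace W" unfolding subspace_def scaleR_eq_smult using W unfolding csub_def by blast
  have "span W = W" using sW by (simp add: span_eq_iff)
  then have "dim W \<noteq> DIM(complex^'m)" using dim_eq_full[of W] ne by metis
  then have "dim W < DIM(complex^'m)" using dim_subset_UNIV[of W] by linarith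
  then obtain z' where z': "z' \<noteq> 0" "\<And>y. y \<in> span W \<Longrightarrow> orthogonal z' y"
    using orthogonal_to_subspace_exists by blast
  define z where "z = (\<chi> i. cnj (z' $ i))"
  have "z \<noteq> 0" using z'(1) by (auto simp: z_def vec_eq_iff)
  moreover have "bdot y z = 0" if y: "y \<in> W" for y
  proof -
    have y2: "\<i> *s y \<in> W" using W y by (auto simp: csub_def)
    have "inner z' y = 0" "inner z' (\<i> *s y) = 0"
      using z'(2) y y2 span_base by (auto simp: orthogonal_def)
    moreover have "Re (bdot y z) = inner z' y"
      by (simp add: inner_vec_def inner_complex_def bdot_def z_def Re_sum mult.commute)
    moreover have "Im (bdot y z) = - inner z' (\<i> *s y)"
      by (simp add: inner_vec_def inner_complex_def bdot_def z_def Im_sum mult.commute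
           flip: sum_negf)
    ultimately have "Re (bdot y z) = 0" "Im (bdot y z) = 0" by simp_all
    then show ?thesis by (simp add: complex_eq_iff)
  qed
  ultimately show ?thesis by blast
qed

definition alg :: "(complex^'m^'m) set \<Rightarrow> bool" where
  "alg A \<longleftrightarrow> mat 1 \<in> A \<and> (\<forall>X\<in>A. \<forall>Y\<in>A. X + Y \<in> A \<and> X ** Y \<in> A) \<and> (\<forall>c. \<forall>X\<in>A. msc c X \<in> A)"

definition irr_alg :: "(complex^'m^'m) set \<Rightarrow> bool" where
  "irr_alg A \<longleftrightarrow> (\<forall>W. csub W \<and> (\<forall>B\<in>A. \<forall>w\<in>W. B *v w \<in> W) \<longrightarrow> W = {0} \<or> W = UNIV)"

lemma alg_0: "alg A \<Longrightarrow> 0 \<in> A"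
  unfolding alg_def by (metis msc_0)

lemma alg_sum: "alg A \<Longrightarrow> (\<And>i. i \<in> I \<Longrightarrow> f i \<in> A) \<Longrightarrow> sum f I \<in> A"
  by (induction I rule: infinite_finite_induct) (auto simp: alg_0 alg_def)

lemma alg_transitive:
  assumes A: "alg A" and irr: "irr_alg A" and v: "v \<noteq> 0"
  shows "\<exists>B\<in>A. B *v v = y"
proof -
  define W where "W = (\<lambda>B. B *v v) ` A"
  have "csub W" unfolding csub_def W_def
  proof (intro conjI ballI allI)
    show "0 \<in> (\<lambda>B. B *v v) ` A" using alg_0[OF A] by force
  next
    fix x y assume "x \<in> (\<lambda>B. B *v v) ` A" "y \<in> (\<lambda>B. B *v v) ` A"
    then obtain B1 B2 where "B1 \<in> A" "B2 \<in> A" "x = B1 *v v" "y = B2 *v v" by blast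
    moreover have "x + y = (B1 + B2) *v v" using \<open>x = B1 *v v\<close> \<open>y = B2 *v v\<close>
      by (simp add: matrix_vector_mult_add_rdistrib)
    ultimately show "x + y \<in> (\<lambda>B. B *v v) ` A"
      using A unfolding alg_def by blast
  next
    fix c x assume "x \<in> (\<lambda>B. B *v v) ` A"
    then obtain B where "B \<in> A" "x = B *v v" by blast
    then show "c *s x \<in> (\<lambda>B. B *v v) ` A"
      using A unfolding alg_def by (auto intro!: image_eqI[where x = "msc c B"])
  qed
  moreover have "\<forall>B\<in>A. \<forall>w\<in>W. B *v w \<in> W"
    using A unfolding W_def alg_def by (auto simp: matrix_vector_mul_assoc)
  moreover have "v \<in> W" using A unfolding W_def alg_def by (auto intro!: image_eqI[where x = "mat 1"])
  ultimately have "W = UNIV" using irr v unfolding irr_alg_def by blast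
  then show ?thesis unfolding W_def by (metis UNIV_I imageE)
qed

lemma kernel_subspace: "vec.subspace {z. (X::complex^'m^'m) *v z = 0}"
  by (auto simp: vec.subspace_def matrix_vector_right_distrib mv_smult)

lemma kd_less:
  fixes S T :: "complex^'m^'m"
  assumes "\<And>y. T *v y = 0 \<Longrightarrow> S *v y = 0" "S *v z = 0" "T *v z \<noteq> 0"
  shows "vec.dim {z. T *v z = 0} < vec.dim {z. S *v z = 0}"
proof -
  have "{z. T *v z = 0} \<subset> {z. S *v z = 0}" using assms by auto
  then show ?thesis using kernel_subspace vec.dim_psubset by (metis vec.span_eq_iff)
qed

lemma vm_add: "w v* (C1 + C2) = w v* C1 + w v* C2"
  by (simp add: vec_eq_iff vector_matrix_mult_def sum.distrib algebra_simps)

lemma vm_msc: "w v* (msc c C) = c *s (w v* C)"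
  by (simp add: vec_eq_iff vector_matrix_mult_def sum_distrib_left mult_ac)

lemma vm_zero: "w v* (0 :: complex^'m^'n) = 0"
  by (simp add: vec_eq_iff vector_matrix_mult_def)

lemma rank_one_entry:
  fixes B T C :: "complex^'m^'m"
  assumes "\<And>i j. T$i$j = u$i * w$j"
  shows "(B ** T ** C)$a$b = (B *v u)$a * (w v* C)$b"
proof -
  have "(B ** T ** C)$a$b = (\<Sum>l\<in>UNIV. (\<Sum>k\<in>UNIV. B$a$k * (u$k * w$l)) * C$l$b)"
    by (simp add: matrix_matrix_mult_def assms)
  also have "\<dots> = (\<Sum>l\<in>UNIV. (\<Sum>k\<in>UNIV. B$a$k * u$k) * (w$l * C$l$b))"
  proof -
    have "(\<Sum>k\<in>UNIV. B$a$k * (u$k * w$l)) = (\<Sum>k\<in>UNIV. B$a$k * u$k) * w$l" for l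
      by (simp add: sum_distrib_right mult.assoc)
    then show ?thesis by (simp add: mult.assoc)
  qed
  also have "\<dots> = (\<Sum>k\<in>UNIV. B$a$k * u$k) * (\<Sum>l\<in>UNIV. w$l * C$l$b)"
    by (simp add: sum_distrib_left)
  also have "\<dots> = (B *v u)$a * (w v* C)$b"
    by (simp add: matrix_vector_mult_def vector_matrix_mult_def)
  finally show ?thesis .
qed

definition Emat :: "'m \<Rightarrow> 'm \<Rightarrow> complex^'m^'m" where
  "Emat i j = (\<chi> a b. if a = i \<and> b = j then 1 else 0)"

lemma if_conj0: "(if P \<and> Q then a else 0) = (if P then (if Q then a else 0) else 0)"
  by simp

lemma mat_expand: "X = (\<Sum>i\<in>UNIV. \<Sum>j\<in>UNIV. msc (X$i$j) (Emat i j))"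
proof -
  have "(\<Sum>i\<in>UNIV. \<Sum>j\<in>UNIV. msc (X$i$j) (Emat i j))$a$b = X$a$b" for a b
  proof -
    have e: "(msc (X$i$j) (Emat i j))$a$b = (if i = a \<and> j = b then X$i$j else 0)" for i j
      by (auto simp: Emat_def)
    have i: "(\<Sum>j\<in>UNIV. if i = a \<and> j = b then X$i$j else 0) = (if i = a then X$i$b else 0)" for i
      by (cases "i = a") simp_all
    show ?thesis by (simp only: sum_component e) (simp add: i)
  qed
  then show ?thesis by (simp add: vec_eq_iff)
qed

lemma burnside:
  fixes A :: "(complex^'m^'m) set"
  assumes A: "alg A" and irr: "irr_alg A"
  shows "A = UNIV"
proof -
  have Aadd: "X + Y \<in> A" "X ** Y \<in> A" "msc c X \<in> A" if "X \<in> A" "Y \<in> A" for X Y c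
    using A that unfolding alg_def by auto
  have A1: "mat 1 \<in> A" using A unfolding alg_def by auto
  define kd where "kd X = vec.dim {z. (X::complex^'m^'m) *v z = 0}" for X
  have kdb: "kd X \<le> CARD('m)" for X
  proof -
    have "kd X \<le> vec.dim (UNIV :: (complex^'m) set)" unfolding kd_def by (rule vec.dim_subset) simp
    then show ?thesis by (metis vec_dim_card)
  qed
  define KS where "KS = kd ` (A - {0})"
  have "KS \<subseteq> {..CARD('m)}" using kdb unfolding KS_def by auto
  then have fKS: "finite KS" using finite_subset by blast
  have m1: "mat 1 \<noteq> (0::complex^'m^'m)"
  proof
    assume "mat 1 = (0::complex^'m^'m)"
    then have "(mat 1 :: complex^'m^'m) $ undefined $ undefined = 0" by simp
    then show False by (simp add: mat_def)
  qed
  have "KS \<noteq> {}" using A1 m1 by (auto simp: KS_def)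
  then have "Max KS \<in> KS" using fKS by simp
  then obtain T where T0: "T \<in> A - {0}" "Max KS = kd T" unfolding KS_def by (rule imageE)
  then have T: "T \<in> A" "T \<noteq> 0" "kd T = Max KS" by auto
  have Tmax: "kd X \<le> kd T" if "X \<in> A" "X \<noteq> 0" for X
    using that fKS T(3) by (auto simp: KS_def)
  have Tnz: "\<exists>z. T *v z \<noteq> 0" using T(2) zero_if_mv_zero by blast
  have TBT: "\<exists>l. T ** B ** T = msc l T" if B: "B \<in> A" for B
  proof -
    define R where "R = range (\<lambda>z. T *v z)"
    have cR: "csub R" unfolding csub_def R_def
    proof (intro conjI ballI allI)
      show "0 \<in> range (\<lambda>z. T *v z)" by (metis matrix_vector_mult_0_right rangeI)
    next
      fix p q assume "p \<in> range (\<lambda>z. T *v z)" "q \<in> range (\<lambda>z. T *v z)"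
      then obtain a b where "p = T *v a" "q = T *v b" by blast
      then have "p + q = T *v (a + b)" by (simp add: matrix_vector_right_distrib)
      then show "p + q \<in> range (\<lambda>z. T *v z)" by blast
    next
      fix c p assume "p \<in> range (\<lambda>z. T *v z)"
      then obtain a where "p = T *v a" by blast
      then have "c *s p = T *v (c *s a)" by (simp add: mv_smult)
      then show "c *s p \<in> range (\<lambda>z. T *v z)" by blast
    qed
    have iR: "\<forall>x\<in>R. (T ** B) *v x \<in> R"
    proof
      fix p assume "p \<in> R"
      then obtain a where "p = T *v a" unfolding R_def by blast
      then have "(T ** B) *v p = T *v ((B ** T) *v a)" by (simp add: matrix_vector_mul_assoc matrix_mul_assoc)
      then show "(T ** B) *v p \<in> R" unfolding R_def by blast
    qed
    have nR: "R \<noteq> {0}" using Tnz unfolding R_def by auto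
    obtain w l where w: "w \<in> R" "w \<noteq> 0" "(T ** B) *v w = l *s w"
      using eig_exists[OF cR iR nR] by blast
    then obtain z where z: "w = T *v z" unfolding R_def by blast
    define S where "S = T ** B ** T + msc (-l) T"
    have SA: "S \<in> A"
    proof -
      have "T ** B \<in> A" using Aadd(2)[OF T(1) B] .
      then have "T ** B ** T \<in> A" using Aadd(2)[OF _ T(1)] by blast
      moreover have "msc (-l) T \<in> A" using Aadd(3)[OF T(1) T(1)] .
      ultimately show ?thesis unfolding S_def using Aadd(1) by blast
    qed
    have e1: "(T ** B ** T) *v z = (T ** B) *v w" by (simp only: z matrix_vector_mul_assoc)
    have Sz: "S *v z = 0"
      unfolding S_def matrix_vector_mult_add_rdistrib msc_mv e1 w(3) z[symmetric]
      by (simp add: vec_eq_iff)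
    have Sk: "S *v y = 0" if "T *v y = 0" for y
    proof -
      have "(T ** B ** T) *v y = 0" by (metis that matrix_vector_mul_assoc matrix_vector_mult_0_right)
      then show ?thesis unfolding S_def matrix_vector_mult_add_rdistrib msc_mv using that by simp
    qed
    have Tz: "T *v z \<noteq> 0" using w(2) z by simp
    have "S = 0"
    proof (rule ccontr)
      assume "S \<noteq> 0"
      then have "kd S \<le> kd T" using Tmax SA by blast
      moreover have "kd T < kd S" unfolding kd_def using kd_less[OF Sk Sz Tz] .
      ultimately show False by simp
    qed
    then have "(T ** B ** T)$i$j + (-l) * T$i$j = 0" for i j
    proof -
      have "S$i$j = 0" using \<open>S = 0\<close> by simp
      then show ?thesis by (simp add: S_def)
    qed
    then have "T ** B ** T = msc l T" by (simp add: vec_eq_iff)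
    then show ?thesis by blast
  qed
  obtain x where x: "T *v x \<noteq> 0" using Tnz by blast
  define u where "u = T *v x"
  have col: "\<exists>c. T *v y = c *s u" for y
  proof -
    obtain B where B: "B \<in> A" "B *v u = y" using alg_transitive[OF A irr] x u_def by blast
    obtain l where l: "T ** B ** T = msc l T" using TBT[OF B(1)] by blast
    have "T *v y = (T ** B ** T) *v x" by (simp add: B(2)[symmetric] u_def matrix_vector_mul_assoc matrix_mul_assoc)
    also have "\<dots> = l *s u" by (simp add: l u_def)
    finally show ?thesis by blast
  qed
  define w where "w = (\<chi> j. SOME c. T *v axis j 1 = c *s u)"
  have Tent: "T$i$j = u$i * w$j" for i j
  proof -
    have "T *v axis j 1 = w$j *s u" unfolding w_def using someI_ex[OF col[of "axis j 1"]] by simp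
    then have "(T *v axis j 1)$i = w$j * u$i" by simp
    then show ?thesis by (simp add: mv_axis mult.commute)
  qed
  have w0: "w \<noteq> 0"
  proof
    assume "w = 0"
    then have "T = 0" by (simp add: vec_eq_iff Tent)
    then show False using T(2) by simp
  qed
  have u0: "u \<noteq> 0" using x u_def by simp
  have row: "\<exists>C\<in>A. w v* C = r" for r
  proof -
    define W where "W = (\<lambda>C. w v* C) ` A"
    have cW: "csub W" unfolding csub_def W_def
    proof (intro conjI ballI allI)
      show "0 \<in> (\<lambda>C. w v* C) ` A" using alg_0[OF A] vm_zero by (metis image_eqI)
    next
      fix p q assume "p \<in> (\<lambda>C. w v* C) ` A" "q \<in> (\<lambda>C. w v* C) ` A"
      then obtain C1 C2 where "C1 \<in> A" "C2 \<in> A" "p = w v* C1" "q = w v* C2" by blast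
      then show "p + q \<in> (\<lambda>C. w v* C) ` A" using Aadd by (metis image_eqI vm_add)
    next
      fix c p assume "p \<in> (\<lambda>C. w v* C) ` A"
      then obtain C where "C \<in> A" "p = w v* C" by blast
      then show "c *s p \<in> (\<lambda>C. w v* C) ` A" using Aadd A1 by (metis image_eqI vm_msc)
    qed
    have "W = UNIV"
    proof (rule ccontr)
      assume "W \<noteq> UNIV"
      then obtain z where z: "z \<noteq> 0" "\<forall>y\<in>W. bdot y z = 0" using annihilator[OF cW] by blast
      have "w$k = 0" for k
      proof -
        obtain C where C: "C \<in> A" "C *v z = axis k 1" using alg_transitive[OF A irr z(1)] by blast
        have "bdot (w v* C) z = 0" using z(2) C(1) unfolding W_def by blast
        then have "bdot w (axis k 1) = 0" by (simp add: bdot_vm C(2))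
        then show ?thesis by (simp add: bdot_def axis_def if_distrib cong: if_cong)
      qed
      then show False using w0 by (simp add: vec_eq_iff)
    qed
    then show ?thesis unfolding W_def by (metis UNIV_I imageE)
  qed
  have E: "Emat i j \<in> A" for i j
  proof -
    obtain B where B: "B \<in> A" "B *v u = axis i 1" using alg_transitive[OF A irr u0] by blast
    obtain C where C: "C \<in> A" "w v* C = axis j 1" using row by blast
    have "(B ** T ** C)$a$b = Emat i j $a$b" for a b
      unfolding rank_one_entry[OF Tent] B(2) C(2) by (simp add: Emat_def axis_def)
    then have "B ** T ** C = Emat i j" by (simp add: vec_eq_iff)
    moreover have "B ** T ** C \<in> A" using Aadd(2)[OF Aadd(2)[OF B(1) T(1)] C(1)] .
    ultimately show ?thesis by simp
  qed
  have "X \<in> A" for X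
  proof -
    have Am: "msc c Y \<in> A" if "Y \<in> A" for c Y using A that unfolding alg_def by auto
    have "(\<Sum>i\<in>UNIV. \<Sum>j\<in>UNIV. msc (X$i$j) (Emat i j)) \<in> A"
      by (intro alg_sum[OF A] Am E)
    then show ?thesis using mat_expand[of X] by simp
  qed
  then show ?thesis by blast
qed

definition comb :: "('g \<Rightarrow> complex^'m^'m) \<Rightarrow> 'g set \<Rightarrow> ('g \<Rightarrow> complex) \<Rightarrow> complex^'m^'m" where
  "comb \<Theta> S a = (\<Sum>n\<in>S. msc (a n) (\<Theta> n))"

definition spanA :: "'g set \<Rightarrow> ('g \<Rightarrow> complex^'m^'m) \<Rightarrow> (complex^'m^'m) set" where
  "spanA N \<Theta> = {X. \<exists>S a. finite S \<and> S \<subseteq> N \<and> X = comb \<Theta> S a}"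

lemma msc_sum: "msc c (sum f S) = (\<Sum>i\<in>S. msc c (f i))"
  by (induction S rule: infinite_finite_induct) (simp_all add: msc_add)

lemma mm_add_r: "(A + B) ** (C :: complex^'m^'m) = A ** C + B ** C"
  by (simp add: vec_eq_iff matrix_matrix_mult_def sum.distrib algebra_simps)

lemma sum_mm: "(sum f S) ** (Y :: complex^'m^'m) = (\<Sum>i\<in>S. f i ** Y)"
  by (induction S rule: infinite_finite_induct) (simp_all add: mm_add_r)

lemma mm_sum: "(Y :: complex^'m^'m) ** (sum f S) = (\<Sum>i\<in>S. Y ** f i)"
  by (induction S rule: infinite_finite_induct) (simp_all add: matrix_add_ldistrib)

lemma trace_zero[simp]: "trace (0 :: complex^'m^'m) = 0"
  by (simp add: trace_def)

lemma trace_sum: "trace (sum f S :: complex^'m^'m) = (\<Sum>i\<in>S. trace (f i))"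
  by (induction S rule: infinite_finite_induct) (simp_all add: trace_add)

lemma comb_ext:
  assumes "finite S'" "S \<subseteq> S'"
  shows "comb \<Theta> S a = comb \<Theta> S' (\<lambda>n. if n \<in> S then a n else 0)"
proof -
  have "comb \<Theta> S' (\<lambda>n. if n \<in> S then a n else 0) = (\<Sum>n\<in>S'. if n \<in> S then msc (a n) (\<Theta> n) else 0)"
    unfolding comb_def by (intro sum.cong) auto
  also have "\<dots> = (\<Sum>n\<in>S' \<inter> S. msc (a n) (\<Theta> n))" using assms(1) by (rule sum.inter_restrict[symmetric])
  also have "S' \<inter> S = S" using assms(2) by blast
  finally show ?thesis by (simp add: comb_def)
qed

lemma comb_add: "comb \<Theta> S a + comb \<Theta> S b = comb \<Theta> S (\<lambda>n. a n + b n)"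
  by (simp add: comb_def msc_add2 sum.distrib)

lemma spanA_add: "X \<in> spanA N \<Theta> \<Longrightarrow> Y \<in> spanA N \<Theta> \<Longrightarrow> X + Y \<in> spanA N \<Theta>"
proof -
  assume "X \<in> spanA N \<Theta>" "Y \<in> spanA N \<Theta>"
  then obtain S a S' b where h: "finite S" "S \<subseteq> N" "X = comb \<Theta> S a" "finite S'" "S' \<subseteq> N" "Y = comb \<Theta> S' b"
    unfolding spanA_def by blast
  have fU: "finite (S \<union> S')" using h by simp
  have e1: "X = comb \<Theta> (S \<union> S') (\<lambda>n. if n \<in> S then a n else 0)"
    using comb_ext[OF fU, of S] h(3) by simp
  have e2: "Y = comb \<Theta> (S \<union> S') (\<lambda>n. if n \<in> S' then b n else 0)"
    using comb_ext[OF fU, of S'] h(6) by simp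
  have "X + Y = comb \<Theta> (S \<union> S') (\<lambda>n. (if n \<in> S then a n else 0) + (if n \<in> S' then b n else 0))"
    unfolding e1 e2 by (rule comb_add)
  then show ?thesis using h unfolding spanA_def by blast
qed

lemma spanA_0: "0 \<in> spanA N \<Theta>"
  unfolding spanA_def comb_def by (rule CollectI, rule exI[where x="{}"]) simp

lemma spanA_msc: "X \<in> spanA N \<Theta> \<Longrightarrow> msc c X \<in> spanA N \<Theta>"
proof -
  assume "X \<in> spanA N \<Theta>"
  then obtain S a where h: "finite S" "S \<subseteq> N" "X = comb \<Theta> S a" unfolding spanA_def by blast
  have "msc c X = comb \<Theta> S (\<lambda>n. c * a n)" using h by (simp add: comb_def msc_sum)
  then show ?thesis using h unfolding spanA_def by blast
qed

lemma spanA_sum: "(\<And>i. i \<in> I \<Longrightarrow> f i \<in> spanA N \<Theta>) \<Longrightarrow> sum f I \<in> spanA N \<Theta>"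
  by (induction I rule: infinite_finite_induct) (auto simp: spanA_0 spanA_add)

lemma spanA_gen: "n \<in> N \<Longrightarrow> \<Theta> n \<in> spanA N \<Theta>"
  unfolding spanA_def comb_def by (rule CollectI, rule exI[where x="{n}"], rule exI[where x="\<lambda>_. 1"]) simp

lemma spanA_mul:
  assumes hom: "\<forall>x\<in>N. \<forall>y\<in>N. \<Theta> (mul x y) = \<Theta> x ** \<Theta> y"
    and cl: "\<forall>x\<in>N. \<forall>y\<in>N. mul x y \<in> N"
    and X: "X \<in> spanA N \<Theta>" and Y: "Y \<in> spanA N \<Theta>"
  shows "X ** Y \<in> spanA N \<Theta>"
proof -
  obtain S a where h: "finite S" "S \<subseteq> N" "X = comb \<Theta> S a" using X unfolding spanA_def by blast
  obtain S' b where h': "finite S'" "S' \<subseteq> N" "Y = comb \<Theta> S' b" using Y unfolding spanA_def by blast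
  have "\<Theta> n ** Y \<in> spanA N \<Theta>" if n: "n \<in> N" for n
  proof -
    have "\<Theta> n ** Y = (\<Sum>n'\<in>S'. msc (b n') (\<Theta> n ** \<Theta> n'))"
      unfolding h'(3) comb_def mm_sum msc_mm2 ..
    also have "\<dots> = (\<Sum>n'\<in>S'. msc (b n') (\<Theta> (mul n n')))"
      using h'(2) n hom by (intro sum.cong refl) auto
    also have "\<dots> \<in> spanA N \<Theta>"
    proof (rule spanA_sum)
      fix n' assume "n' \<in> S'"
      then have "mul n n' \<in> N" using h'(2) n cl by auto
      then show "msc (b n') (\<Theta> (mul n n')) \<in> spanA N \<Theta>" by (intro spanA_msc spanA_gen)
    qed
    finally show ?thesis .
  qed
  moreover have "X ** Y = (\<Sum>n\<in>S. msc (a n) (\<Theta> n ** Y))" unfolding h(3) comb_def sum_mm msc_mm1 ..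
  moreover have "(\<Sum>n\<in>S. msc (a n) (\<Theta> n ** Y)) \<in> spanA N \<Theta>"
  proof (rule spanA_sum)
    fix n assume "n \<in> S"
    then have "n \<in> N" using h(2) by blast
    then have "\<Theta> n ** Y \<in> spanA N \<Theta>" by (rule calculation(1))
    then show "msc (a n) (\<Theta> n ** Y) \<in> spanA N \<Theta>" by (rule spanA_msc)
  qed
  ultimately show ?thesis by simp
qed

lemma trace_comb1:
  assumes hom: "\<forall>x\<in>N. \<forall>y\<in>N. \<Theta> (mul x y) = \<Theta> x ** \<Theta> y" and "S \<subseteq> N" "n' \<in> N"
  shows "trace (comb \<Theta> S a ** \<Theta> n') = (\<Sum>n\<in>S. a n * trace (\<Theta> (mul n n')))"
proof -
  have "trace (comb \<Theta> S a ** \<Theta> n') = (\<Sum>n\<in>S. a n * trace (\<Theta> n ** \<Theta> n'))"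
    unfolding comb_def sum_mm trace_sum msc_mm1 msc_trace ..
  also have "\<dots> = (\<Sum>n\<in>S. a n * trace (\<Theta> (mul n n')))"
    using assms by (intro sum.cong refl) auto
  finally show ?thesis .
qed

lemma comb_prod:
  assumes hom: "\<forall>x\<in>N. \<forall>y\<in>N. \<Theta> (mul x y) = \<Theta> x ** \<Theta> y"
    and S: "S \<subseteq> N" "S' \<subseteq> N"
  shows "comb \<Theta> S a ** comb \<Theta> S' b = (\<Sum>n\<in>S. \<Sum>n'\<in>S'. msc (a n * b n') (\<Theta> (mul n n')))"
proof -
  have i: "\<Theta> n ** comb \<Theta> S' b = (\<Sum>n'\<in>S'. msc (b n') (\<Theta> (mul n n')))" if "n \<in> S" for n
  proof -
    have "\<Theta> n ** comb \<Theta> S' b = (\<Sum>n'\<in>S'. msc (b n') (\<Theta> n ** \<Theta> n'))"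
      unfolding comb_def mm_sum msc_mm2 ..
    also have "\<dots> = (\<Sum>n'\<in>S'. msc (b n') (\<Theta> (mul n n')))"
    proof (intro sum.cong refl)
      fix x assume "x \<in> S'"
      then have "n \<in> N" "x \<in> N" using that S by auto
      then show "msc (b x) (\<Theta> n ** \<Theta> x) = msc (b x) (\<Theta> (mul n x))" using hom by simp
    qed
    finally show ?thesis .
  qed
  have "comb \<Theta> S a ** comb \<Theta> S' b = (\<Sum>n\<in>S. msc (a n) (\<Theta> n ** comb \<Theta> S' b))"
    unfolding comb_def[of \<Theta> S a] sum_mm msc_mm1 ..
  also have "\<dots> = (\<Sum>n\<in>S. msc (a n) (\<Sum>n'\<in>S'. msc (b n') (\<Theta> (mul n n'))))"
    using i by (intro sum.cong refl) auto
  also have "\<dots> = (\<Sum>n\<in>S. \<Sum>n'\<in>S'. msc (a n * b n') (\<Theta> (mul n n')))"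
    by (simp add: msc_sum)
  finally show ?thesis .
qed

lemma trace_comb2:
  assumes hom: "\<forall>x\<in>N. \<forall>y\<in>N. \<Theta> (mul x y) = \<Theta> x ** \<Theta> y"
    and cl: "\<forall>x\<in>N. \<forall>y\<in>N. mul x y \<in> N"
    and S: "S \<subseteq> N" "S' \<subseteq> N" and n: "n'' \<in> N"
  shows "trace ((comb \<Theta> S a ** comb \<Theta> S' b) ** \<Theta> n'')
       = (\<Sum>n\<in>S. \<Sum>n'\<in>S'. a n * b n' * trace (\<Theta> (mul (mul n n') n'')))"
proof -
  have "trace ((comb \<Theta> S a ** comb \<Theta> S' b) ** \<Theta> n'')
      = (\<Sum>n\<in>S. \<Sum>n'\<in>S'. a n * b n' * trace (\<Theta> (mul n n') ** \<Theta> n''))"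
    unfolding comb_prod[OF hom S] sum_mm trace_sum msc_mm1 msc_trace ..
  also have "\<dots> = (\<Sum>n\<in>S. \<Sum>n'\<in>S'. a n * b n' * trace (\<Theta> (mul (mul n n') n'')))"
  proof (intro sum.cong refl)
    fix x y assume "x \<in> S" "y \<in> S'"
    then have "mul x y \<in> N" using S cl by auto
    then show "a x * b y * trace (\<Theta> (mul x y) ** \<Theta> n'') = a x * b y * trace (\<Theta> (mul (mul x y) n''))"
      using hom n by simp
  qed
  finally show ?thesis .
qed

lemma trace_comb_comb:
  assumes hom: "\<forall>x\<in>N. \<forall>y\<in>N. \<Theta> (mul x y) = \<Theta> x ** \<Theta> y"
    and S: "S \<subseteq> N" "S' \<subseteq> N"
  shows "trace (comb \<Theta> S a ** comb \<Theta> S' b)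
       = (\<Sum>n\<in>S. \<Sum>n'\<in>S'. a n * b n' * trace (\<Theta> (mul n n')))"
  unfolding comb_prod[OF hom S] trace_sum msc_trace ..

lemma spanA_univ_of_irr:
  fixes \<Theta> :: "'g \<Rightarrow> complex^'m^'m"
  assumes hom: "\<forall>x\<in>N. \<forall>y\<in>N. \<Theta> (mul x y) = \<Theta> x ** \<Theta> y"
    and cl: "\<forall>x\<in>N. \<forall>y\<in>N. mul x y \<in> N"
    and one: "e \<in> N" "\<Theta> e = mat 1"
    and irr: "irreducible_rep N \<Theta>"
  shows "spanA N \<Theta> = UNIV"
proof (rule burnside)
  have m1: "mat 1 \<in> spanA N \<Theta>" using spanA_gen[OF one(1), of \<Theta>] one(2) by simp
  have ad: "\<forall>X\<in>spanA N \<Theta>. \<forall>Y\<in>spanA N \<Theta>. X + Y \<in> spanA N \<Theta> \<and> X ** Y \<in> spanA N \<Theta>"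
  proof (intro ballI conjI)
    fix X Y assume "X \<in> spanA N \<Theta>" "Y \<in> spanA N \<Theta>"
    then show "X + Y \<in> spanA N \<Theta>" "X ** Y \<in> spanA N \<Theta>"
      by (rule spanA_add, rule spanA_mul[OF hom cl])
  qed
  have sc: "\<forall>c. \<forall>X\<in>spanA N \<Theta>. msc c X \<in> spanA N \<Theta>"
    by (intro allI ballI spanA_msc)
  show "alg (spanA N \<Theta>)" unfolding alg_def using m1 ad sc by (intro conjI)
  show "irr_alg (spanA N \<Theta>)" unfolding irr_alg_def
  proof (intro allI impI)
    fix W :: "(complex^'m) set"
    assume W: "csub W \<and> (\<forall>B\<in>spanA N \<Theta>. \<forall>w\<in>W. B *v w \<in> W)"
    have c: "0 \<in> W" "\<forall>x\<in>W. \<forall>y\<in>W. x + y \<in> W" "\<forall>c. \<forall>x\<in>W. c *s x \<in> W"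
      using W unfolding csub_def by auto
    have "\<forall>x\<in>N. \<forall>v\<in>W. \<Theta> x *v v \<in> W"
    proof (intro ballI)
      fix x v assume "x \<in> N" "v \<in> W"
      then show "\<Theta> x *v v \<in> W" using W spanA_gen[OF \<open>x \<in> N\<close>, of \<Theta>] by blast
    qed
    then have "invariant_subspace N \<Theta> W"
      unfolding invariant_subspace_def using c by (intro conjI)
    then show "W = {0} \<or> W = UNIV" using irr unfolding irreducible_rep_def by blast
  qed
qed

lemma prod01: "(if P then 1 else 0) * (if Q then 1 else 0) = (if P \<and> Q then (1::complex) else 0)"
  by simp

lemma trace_Emat: "trace (Emat i j ** Emat k l) = (if j = k \<and> i = l then 1 else (0::complex))"
proof -
  have "(Emat i j ** Emat k l)$a$a = (if a = i \<and> j = k \<and> a = l then 1 else 0)" for a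
  proof -
    have "(Emat i j ** Emat k l)$a$a = (\<Sum>b\<in>UNIV. if a = i \<and> a = l \<and> j = k then (if b = j then 1 else 0) else (0::complex))"
      unfolding matrix_matrix_mult_def Emat_def by (auto simp: prod01 intro!: sum.cong)
    then show ?thesis by (cases "a = i \<and> a = l \<and> j = k") auto
  qed
  then show ?thesis unfolding trace_def by (auto simp: if_conj0)
qed

lemma trace_Emat_right: "trace (X ** Emat j i) = X$i$(j::'m::finite)"
proof -
  have "(X ** Emat j i)$a$a = (if a = i then X$i$j else 0)" for a
  proof -
    have "(X ** Emat j i)$a$a = (\<Sum>b\<in>UNIV. if a = i then (if b = j then X$a$b else 0) else 0)"
      unfolding matrix_matrix_mult_def Emat_def by (auto intro!: sum.cong)
    then show ?thesis by auto
  qed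
  then show ?thesis unfolding trace_def by simp
qed

lemma scaleR_msc: "scaleR r (M :: complex^'m^'m) = msc (complex_of_real r) M"
  by (simp add: vec_eq_iff) (simp add: scaleR_conv_of_real)

lemma transfer:
  fixes \<Theta>1 \<Theta>2 :: "'g \<Rightarrow> complex^'m^'m"
  assumes hom1: "\<forall>x\<in>N. \<forall>y\<in>N. \<Theta>1 (mul x y) = \<Theta>1 x ** \<Theta>1 y"
    and hom2: "\<forall>x\<in>N. \<forall>y\<in>N. \<Theta>2 (mul x y) = \<Theta>2 x ** \<Theta>2 y"
    and cl: "\<forall>x\<in>N. \<forall>y\<in>N. mul x y \<in> N"
    and tr: "\<forall>n\<in>N. trace (\<Theta>1 n) = trace (\<Theta>2 n)"
    and span1: "spanA N \<Theta>1 = UNIV"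
  shows "spanA N \<Theta>2 = UNIV"
proof -
  have "\<forall>p::'m\<times>'m. \<exists>S a. finite S \<and> S \<subseteq> N \<and> Emat (fst p) (snd p) = comb \<Theta>1 S a"
    using span1 unfolding spanA_def by blast
  from choice[OF this] obtain Sf where Sf1: "\<forall>p. \<exists>a. finite (Sf p) \<and> Sf p \<subseteq> N \<and> Emat (fst p) (snd p) = comb \<Theta>1 (Sf p) a"
    by (rule exE)
  from choice[OF this] obtain af where Sf0: "\<forall>p. finite (Sf p) \<and> Sf p \<subseteq> N \<and> Emat (fst p) (snd p) = comb \<Theta>1 (Sf p) (af p)"
    by (rule exE)
  then have Sf: "\<And>p. finite (Sf p) \<and> Sf p \<subseteq> N \<and> Emat (fst p) (snd p) = comb \<Theta>1 (Sf p) (af p)"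
    by blast
  define F where "F i j = comb \<Theta>2 (Sf (i,j)) (af (i,j))" for i j
  have FA: "F i j \<in> spanA N \<Theta>2" for i j
  proof -
    have "finite (Sf (i,j))" "Sf (i,j) \<subseteq> N" using Sf[of "(i,j)"] by auto
    then show ?thesis unfolding F_def spanA_def by blast
  qed
  have trF: "trace (F i j ** F k l) = trace (Emat i j ** Emat k l)" for i j k l
  proof -
    have s1: "Sf (i,j) \<subseteq> N" "Sf (k,l) \<subseteq> N" using Sf by auto
    have "trace (F i j ** F k l) = (\<Sum>n\<in>Sf (i,j). \<Sum>n'\<in>Sf (k,l). af (i,j) n * af (k,l) n' * trace (\<Theta>2 (mul n n')))"
      unfolding F_def by (rule trace_comb_comb[OF hom2 s1])
    also have "\<dots> = (\<Sum>n\<in>Sf (i,j). \<Sum>n'\<in>Sf (k,l). af (i,j) n * af (k,l) n' * trace (\<Theta>1 (mul n n')))"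
    proof (intro sum.cong refl)
      fix x y assume "x \<in> Sf (i,j)" "y \<in> Sf (k,l)"
      then have "mul x y \<in> N" using s1 cl by blast
      then show "af (i, j) x * af (k, l) y * trace (\<Theta>2 (mul x y)) = af (i, j) x * af (k, l) y * trace (\<Theta>1 (mul x y))"
        using tr by simp
    qed
    also have "\<dots> = trace (comb \<Theta>1 (Sf (i,j)) (af (i,j)) ** comb \<Theta>1 (Sf (k,l)) (af (k,l)))"
      by (rule trace_comb_comb[OF hom1 s1, symmetric])
    also have "\<dots> = trace (Emat i j ** Emat k l)" using Sf[of "(i,j)"] Sf[of "(k,l)"] by simp
    finally show ?thesis .
  qed
  define L where "L X = (\<Sum>i\<in>UNIV. \<Sum>j\<in>UNIV. msc (X$i$j) (F i j))" for X :: "complex^'m^'m"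
  have key: "trace (L X ** F l k) = X$k$l" for X k l
  proof -
    have "trace (L X ** F l k) = (\<Sum>i\<in>UNIV. \<Sum>j\<in>UNIV. X$i$j * trace (Emat i j ** Emat l k))"
      unfolding L_def by (simp add: sum_mm trace_sum trF)
    also have "\<dots> = (\<Sum>i\<in>UNIV. \<Sum>j\<in>UNIV. if i = k then (if j = l then X$i$j else 0) else 0)"
      by (auto simp: trace_Emat intro!: sum.cong)
    also have "\<dots> = (\<Sum>i\<in>UNIV. if i = k then X$i$l else 0)"
    proof (intro sum.cong refl)
      fix i show "(\<Sum>j\<in>UNIV. if i = k then (if j = l then X$i$j else 0) else 0) = (if i = k then X$i$l else 0)"
        by (cases "i = k") simp_all
    qed
    also have "\<dots> = X$k$l" by simp
    finally show ?thesis .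
  qed
  have inj: "inj L"
  proof (rule injI)
    fix X Y assume "L X = L Y"
    then have "X$k$l = Y$k$l" for k l using key by metis
    then show "X = Y" by (simp add: vec_eq_iff)
  qed
  have lin: "linear L"
  proof (rule linearI)
    fix X Y :: "complex^'m^'m"
    show "L (X + Y) = L X + L Y" unfolding L_def by (simp add: msc_add2 sum.distrib)
  next
    fix r :: real and X :: "complex^'m^'m"
    have e: "(scaleR r X)$i$j = complex_of_real r * X$i$j" for i j
      by simp (simp add: scaleR_conv_of_real)
    show "L (scaleR r X) = scaleR r (L X)"
      unfolding L_def scaleR_msc msc_sum msc_msc by simp
  qed
  have "surj L" using linear_injective_imp_surjective[OF lin inj] by simp
  moreover have "L X \<in> spanA N \<Theta>2" for X unfolding L_def by (intro spanA_sum spanA_msc FA)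
  ultimately have "Y \<in> spanA N \<Theta>2" for Y by (metis surjD)
  then show ?thesis by blast
qed

lemma nondeg:
  assumes span: "spanA N \<Theta> = UNIV" and z: "\<forall>n\<in>N. trace (X ** \<Theta> n) = 0"
  shows "X = (0 :: complex^'m^'m)"
proof -
  have "trace (X ** Y) = 0" for Y
  proof -
    obtain S a where h: "finite S" "S \<subseteq> N" "Y = comb \<Theta> S a" using span unfolding spanA_def by blast
    then show ?thesis using z by (auto simp: comb_def mm_sum trace_sum intro!: sum.neutral)
  qed
  then have "X$i$j = 0" for i j using trace_Emat_right[of X j i] by simp
  then show ?thesis by (simp add: vec_eq_iff)
qed

lemma rep_one:
  assumes "invertible (P :: complex^'m^'m)" "P = P ** P"
  shows "P = mat 1"
proof -
  obtain Q where Q: "P ** Q = mat 1" using assms(1) unfolding invertible_def by blast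
  have "mat 1 = (P ** P) ** Q" using Q assms(2) by simp
  also have "\<dots> = P" by (simp add: matrix_mul_assoc[symmetric] Q)
  finally show ?thesis by simp
qed

lemma continuous_map_cdivide:
  "continuous_map X euclidean f \<Longrightarrow> continuous_map X euclidean g \<Longrightarrow> (\<And>x. x \<in> topspace X \<Longrightarrow> g x \<noteq> 0)
   \<Longrightarrow> continuous_map X euclidean (\<lambda>x. f x / g x :: complex)"
  by (simp add: continuous_map_atin tendsto_divide)

lemma mat_mm: "mat c ** (X :: complex^'m^'m) = msc c X"
  by (simp add: vec_eq_iff matrix_matrix_mult_def mat_def if_distrib[of "\<lambda>x. x * _"] cong: if_cong)

lemma mm_diff: "(X - Y) ** (Z :: complex^'m^'m) = X ** Z - Y ** Z"
  by (simp add: vec_eq_iff matrix_matrix_mult_def sum_subtractf algebra_simps)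

lemma mat1_nz: "mat 1 \<noteq> (0::complex^'m^'m)"
proof
  assume "mat 1 = (0::complex^'m^'m)"
  then have "(mat 1 :: complex^'m^'m) $ undefined $ undefined = 0" by simp
  then show False by (simp add: mat_def)
qed

lemma invertible_nz: "invertible (P :: complex^'m^'m) \<Longrightarrow> P \<noteq> 0"
  using mat1_nz unfolding invertible_def by fastforce

lemma h1: assumes "a * t = t / d" shows "a * b * t = b * t / (d::complex)"
proof -
  have "a * b * t = b * (a * t)" by (simp add: mult_ac)
  also have "\<dots> = b * (t / d)" using assms by simp
  finally show ?thesis by simp
qed

lemma h2: assumes "a * a' * t = t / d" shows "a * b * (a' * b') * t = b * b' * t / (d::complex)"
proof -
  have "a * b * (a' * b') * t = b * b' * (a * a' * t)" by (simp add: mult_ac)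
  also have "\<dots> = b * b' * (t / d)" using assms by simp
  finally show ?thesis by simp
qed

lemma h3: assumes "t / d = t / e" shows "a * t / d = a * t / (e::complex)"
proof -
  have "a * t / d = a * (t / d)" by simp
  also have "\<dots> = a * (t / e)" using assms by simp
  finally show ?thesis by simp
qed

theorem lemma2p8:
  fixes G :: "('g, 'b) monoid_scheme" and T :: "'g topology"
    and N K L :: "'g set" and \<theta> \<theta>h \<psi> \<psi>' \<mu> \<mu>' :: "'g \<Rightarrow> complex" and g :: 'g
  assumes prof: "profinite_group G T"
    and N_open: "openin T N" and N_normal: "N \<lhd> G"
    and \<theta>_irr: "irr_char G T N TYPE('m::finite) \<theta>"
    and L_sub: "subgroup L G" and NL: "N \<subseteq> L" and L_stab: "L \<subseteq> stab_twist G T N \<theta>"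
    and K_sub: "subgroup K G" and NK: "N \<subseteq> K" and K_stab: "K \<subseteq> stab_char G N \<theta>"
    and L_norm_K: "\<forall>l \<in> L. (\<lambda>x. l \<otimes>\<^bsub>G\<^esub> x \<otimes>\<^bsub>G\<^esub> inv\<^bsub>G\<^esub> l) ` K = K"
    and ext: "strong_ext G T N K TYPE('m) \<theta> \<theta>h"
    and gL: "g \<in> L"
    and \<psi>_lin: "lin_char G T (carrier G) \<psi>" and \<psi>'_lin: "lin_char G T (carrier G) \<psi>'"
    and \<psi>_N: "\<forall>n \<in> N. conj_fun G g \<theta> n = \<theta> n * \<psi> n"
    and \<psi>'_N: "\<forall>n \<in> N. conj_fun G g \<theta> n = \<theta> n * \<psi>' n"
    and \<mu>_F: "F_fun G K N \<mu>" and \<mu>'_F: "F_fun G K N \<mu>'"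
    and \<mu>_K: "\<forall>x \<in> K. conj_fun G g \<theta>h x = \<theta>h x * \<psi> x * \<mu> x"
    and \<mu>'_K: "\<forall>x \<in> K. conj_fun G g \<theta>h x = \<theta>h x * \<psi>' x * \<mu>' x"
  shows "\<exists>\<nu> \<in> Gamma G T K N \<theta>h. \<forall>x \<in> K. \<mu>' x = \<mu> x * \<nu> x"
proof -
  have grp: "group G" and topG: "topspace T = carrier G"
    and mcont: "continuous_map (prod_topology T T) T (\<lambda>(x, y). x \<otimes>\<^bsub>G\<^esub> y)"
    using prof unfolding profinite_group_def by auto
  have Nsub: "subgroup N G" using N_normal by (rule normal_imp_subgroup)
  have NG: "N \<subseteq> carrier G" using Nsub by (rule subgroup.subset)
  have KG: "K \<subseteq> carrier G" using K_sub by (rule subgroup.subset)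
  have oneN: "\<one>\<^bsub>G\<^esub> \<in> N" using Nsub by (rule subgroup.one_closed)
  have clN: "\<forall>x\<in>N. \<forall>y\<in>N. x \<otimes>\<^bsub>G\<^esub> y \<in> N" using Nsub by (simp add: subgroup.m_closed)
  have clK: "\<forall>x\<in>K. \<forall>y\<in>K. x \<otimes>\<^bsub>G\<^esub> y \<in> K" using K_sub by (simp add: subgroup.m_closed)
  obtain \<Theta>2 :: "'g \<Rightarrow> complex^'m^'m" and Pr :: "'g \<Rightarrow> complex^'m^'m" and \<alpha>
    where r2: "cont_rep G T N \<Theta>2" and aff2: "affords N \<Theta>2 \<theta>" and pr: "proj_rep G K Pr \<alpha>"
      and Prx: "\<forall>x \<in> K. \<forall>n \<in> N. Pr (x \<otimes>\<^bsub>G\<^esub> n) = Pr x ** \<Theta>2 n \<and> Pr (n \<otimes>\<^bsub>G\<^esub> x) = \<Theta>2 n ** Pr x"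
      and thh: "\<forall>x \<in> K. \<theta>h x = trace (Pr x)"
    using ext unfolding strong_ext_def by blast
  obtain \<Theta>1 :: "'g \<Rightarrow> complex^'m^'m"
    where r1: "cont_rep G T N \<Theta>1" and irr1: "irreducible_rep N \<Theta>1" and aff1: "affords N \<Theta>1 \<theta>"
    using \<theta>_irr unfolding irr_char_def by blast
  have hom1: "\<forall>x\<in>N. \<forall>y\<in>N. \<Theta>1 (x \<otimes>\<^bsub>G\<^esub> y) = \<Theta>1 x ** \<Theta>1 y" using r1 unfolding cont_rep_def by blast
  have hom2: "\<forall>x\<in>N. \<forall>y\<in>N. \<Theta>2 (x \<otimes>\<^bsub>G\<^esub> y) = \<Theta>2 x ** \<Theta>2 y" using r2 unfolding cont_rep_def by blast
  have one1: "\<Theta>1 \<one>\<^bsub>G\<^esub> = mat 1"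
  proof (rule rep_one)
    show "invertible (\<Theta>1 \<one>\<^bsub>G\<^esub>)" using r1 oneN unfolding cont_rep_def by blast
    have "\<one>\<^bsub>G\<^esub> \<otimes>\<^bsub>G\<^esub> \<one>\<^bsub>G\<^esub> = \<one>\<^bsub>G\<^esub>" using grp by (simp add: group.is_monoid)
    then show "\<Theta>1 \<one>\<^bsub>G\<^esub> = \<Theta>1 \<one>\<^bsub>G\<^esub> ** \<Theta>1 \<one>\<^bsub>G\<^esub>" using hom1 oneN by metis
  qed
  have span1: "spanA N \<Theta>1 = UNIV" by (rule spanA_univ_of_irr[OF hom1 clN oneN one1 irr1])
  have trN: "\<forall>n\<in>N. trace (\<Theta>1 n) = trace (\<Theta>2 n)" using aff1 aff2 unfolding affords_def by simp
  have span2: "spanA N \<Theta>2 = UNIV" by (rule transfer[OF hom1 hom2 clN trN span1])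
  interpret G: group G by (rule grp)
  have hom2': "\<forall>x\<in>N. \<forall>y\<in>N. \<Theta>2 (x \<otimes>\<^bsub>G\<^esub> y) = \<Theta>2 x ** \<Theta>2 y" by (rule hom2)
  have xnK: "x \<otimes>\<^bsub>G\<^esub> n \<in> K" if "x \<in> K" "n \<in> N" for x n using clK NK that by blast
  have oneK: "\<one>\<^bsub>G\<^esub> \<in> K" using K_sub by (rule subgroup.one_closed)
  have \<psi>nz: "\<psi> x \<noteq> 0" if "x \<in> carrier G" for x using \<psi>_lin that unfolding lin_char_def by blast
  have \<psi>'nz: "\<psi>' x \<noteq> 0" if "x \<in> carrier G" for x using \<psi>'_lin that unfolding lin_char_def by blast
  have \<psi>mul: "\<psi> (x \<otimes>\<^bsub>G\<^esub> y) = \<psi> x * \<psi> y" if "x \<in> carrier G" "y \<in> carrier G" for x y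
    using \<psi>_lin that unfolding lin_char_def by blast
  have \<psi>'mul: "\<psi>' (x \<otimes>\<^bsub>G\<^esub> y) = \<psi>' x * \<psi>' y" if "x \<in> carrier G" "y \<in> carrier G" for x y
    using \<psi>'_lin that unfolding lin_char_def by blast
  define chi where "chi x = \<psi> x / \<psi>' x" for x
  define nu where "nu x = \<mu>' x / \<mu> x" for x
  define c where "c x = nu x / chi x" for x
  have chinz: "chi x \<noteq> 0" if "x \<in> carrier G" for x using \<psi>nz \<psi>'nz that by (simp add: chi_def)
  have chimul: "chi (x \<otimes>\<^bsub>G\<^esub> y) = chi x * chi y" if "x \<in> carrier G" "y \<in> carrier G" for x y
    using that by (simp add: chi_def \<psi>mul \<psi>'mul)
  have F2: "chi n = 1" if "n \<in> N" "\<theta> n \<noteq> 0" for n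
  proof -
    have "\<theta> n * \<psi> n = \<theta> n * \<psi>' n" using \<psi>_N \<psi>'_N that(1) by metis
    then have "\<psi> n = \<psi>' n" using that(2) by simp
    then show ?thesis using \<psi>'nz[of n] that(1) NG by (auto simp: chi_def)
  qed
  have \<mu>nz: "\<mu> x \<noteq> 0" if "x \<in> K" for x using \<mu>_F that unfolding F_fun_def by blast
  have \<mu>'nz: "\<mu>' x \<noteq> 0" if "x \<in> K" for x using \<mu>'_F that unfolding F_fun_def by blast
  have nuF: "nu (x \<otimes>\<^bsub>G\<^esub> n) = nu x" if "x \<in> K" "n \<in> N" for x n
    using \<mu>_F \<mu>'_F that unfolding F_fun_def nu_def by simp
  have nunz: "nu x \<noteq> 0" if "x \<in> K" for x using \<mu>nz \<mu>'nz that by (simp add: nu_def)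
  have F3: "\<theta>h x * chi x = \<theta>h x * nu x" if x: "x \<in> K" for x
  proof -
    have eq: "\<theta>h x * \<psi> x * \<mu> x = \<theta>h x * \<psi>' x * \<mu>' x" using \<mu>_K \<mu>'_K x by metis
    have nz: "\<psi>' x \<noteq> 0" "\<mu> x \<noteq> 0" using \<psi>'nz \<mu>nz x KG by auto
    have "\<theta>h x * chi x - \<theta>h x * nu x = (\<theta>h x * \<psi> x * \<mu> x - \<theta>h x * \<psi>' x * \<mu>' x) / (\<psi>' x * \<mu> x)"
      using nz by (simp add: chi_def nu_def field_simps)
    then show ?thesis using eq by simp
  qed
  have cnz: "c x \<noteq> 0" if "x \<in> K" for x using nunz chinz that KG by (auto simp: c_def)
  have nuc: "nu x = c x * chi x" if "x \<in> K" for x using chinz that KG by (auto simp: c_def)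
  have R: "\<theta>h (x \<otimes>\<^bsub>G\<^esub> n) / chi n = \<theta>h (x \<otimes>\<^bsub>G\<^esub> n) / c x" if x: "x \<in> K" and n: "n \<in> N" for x n
  proof (cases "\<theta>h (x \<otimes>\<^bsub>G\<^esub> n) = 0")
    case False
    have xG: "x \<in> carrier G" and nG: "n \<in> carrier G" using x n KG NG by auto
    have "\<theta>h (x \<otimes>\<^bsub>G\<^esub> n) * chi (x \<otimes>\<^bsub>G\<^esub> n) = \<theta>h (x \<otimes>\<^bsub>G\<^esub> n) * nu (x \<otimes>\<^bsub>G\<^esub> n)"
      using F3 xnK[OF x n] by blast
    then have "chi x * chi n = nu x" using False chimul[OF xG nG] nuF[OF x n] by simp
    then have "chi n = c x" using chinz[OF xG] by (auto simp: c_def field_simps)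
    then show ?thesis by simp
  qed simp
  have trPr: "trace (Pr x ** \<Theta>2 n) = \<theta>h (x \<otimes>\<^bsub>G\<^esub> n)" if "x \<in> K" "n \<in> N" for x n
    using Prx thh xnK that by metis
  have th2: "\<theta> n = trace (\<Theta>2 n)" if "n \<in> N" for n using aff2 that unfolding affords_def by blast
  have F2a: "chi n * trace (\<Theta>2 (n \<otimes>\<^bsub>G\<^esub> n')) = trace (\<Theta>2 (n \<otimes>\<^bsub>G\<^esub> n')) / chi n'"
    if "n \<in> N" "n' \<in> N" for n n'
  proof (cases "trace (\<Theta>2 (n \<otimes>\<^bsub>G\<^esub> n')) = 0")
    case False
    have nn: "n \<otimes>\<^bsub>G\<^esub> n' \<in> N" using clN that by blast
    have "chi (n \<otimes>\<^bsub>G\<^esub> n') = 1" using F2[OF nn] th2[OF nn] False by simp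
    moreover have "n \<in> carrier G" "n' \<in> carrier G" using that NG by auto
    ultimately have "chi n * chi n' = 1" using chimul by metis
    then have "chi n = 1 / chi n'" using chinz that NG by (auto simp: field_simps)
    then show ?thesis by simp
  qed simp
  have F2b: "chi n * chi n' * trace (\<Theta>2 (n \<otimes>\<^bsub>G\<^esub> n' \<otimes>\<^bsub>G\<^esub> n'')) = trace (\<Theta>2 (n \<otimes>\<^bsub>G\<^esub> n' \<otimes>\<^bsub>G\<^esub> n'')) / chi n''"
    if "n \<in> N" "n' \<in> N" "n'' \<in> N" for n n' n''
  proof (cases "trace (\<Theta>2 (n \<otimes>\<^bsub>G\<^esub> n' \<otimes>\<^bsub>G\<^esub> n'')) = 0")
    case False
    have nn: "n \<otimes>\<^bsub>G\<^esub> n' \<otimes>\<^bsub>G\<^esub> n'' \<in> N" using clN that by blast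
    have "chi (n \<otimes>\<^bsub>G\<^esub> n' \<otimes>\<^bsub>G\<^esub> n'') = 1" using F2[OF nn] th2[OF nn] False by simp
    moreover have g: "n \<in> carrier G" "n' \<in> carrier G" "n'' \<in> carrier G" using that NG by auto
    moreover have "n \<otimes>\<^bsub>G\<^esub> n' \<in> carrier G" using g by simp
    ultimately have "chi n * chi n' * chi n'' = 1" using chimul by metis
    then have "chi n * chi n' = 1 / chi n''" using chinz that NG by (auto simp: field_simps)
    then show ?thesis by simp
  qed simp
  have Phi: "comb \<Theta>2 S (\<lambda>n. chi n * b n) = msc (1 / c y) (Pr y)"
    if y: "y \<in> K" and S: "finite S" "S \<subseteq> N" and Sb: "comb \<Theta>2 S b = Pr y" for y S b
  proof -
    define Z where "Z = comb \<Theta>2 S (\<lambda>n. chi n * b n) - msc (1 / c y) (Pr y)"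
    have "trace (Z ** \<Theta>2 n') = 0" if n': "n' \<in> N" for n'
    proof -
      have "trace (comb \<Theta>2 S (\<lambda>n. chi n * b n) ** \<Theta>2 n') = (\<Sum>n\<in>S. chi n * b n * trace (\<Theta>2 (n \<otimes>\<^bsub>G\<^esub> n')))"
        by (rule trace_comb1[OF hom2 S(2) n'])
      also have "\<dots> = (\<Sum>n\<in>S. b n * trace (\<Theta>2 (n \<otimes>\<^bsub>G\<^esub> n')) / chi n')"
      proof (intro sum.cong refl)
        fix n assume "n \<in> S"
        then have "n \<in> N" using S by blast
        then show "chi n * b n * trace (\<Theta>2 (n \<otimes>\<^bsub>G\<^esub> n')) = b n * trace (\<Theta>2 (n \<otimes>\<^bsub>G\<^esub> n')) / chi n'"
          by (rule h1[OF F2a[OF _ n']])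
      qed
      also have "\<dots> = (\<Sum>n\<in>S. b n * trace (\<Theta>2 (n \<otimes>\<^bsub>G\<^esub> n'))) / chi n'"
        by (simp add: sum_divide_distrib)
      also have "\<dots> = trace (comb \<Theta>2 S b ** \<Theta>2 n') / chi n'"
        by (simp add: trace_comb1[OF hom2 S(2) n'])
      also have "\<dots> = \<theta>h (y \<otimes>\<^bsub>G\<^esub> n') / c y" using Sb trPr[OF y n'] R[OF y n'] by simp
      finally have e1: "trace (comb \<Theta>2 S (\<lambda>n. chi n * b n) ** \<Theta>2 n') = \<theta>h (y \<otimes>\<^bsub>G\<^esub> n') / c y" .
      have e2: "trace (msc (1 / c y) (Pr y) ** \<Theta>2 n') = \<theta>h (y \<otimes>\<^bsub>G\<^esub> n') / c y"
        using trPr[OF y n'] by simp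
      show ?thesis unfolding Z_def mm_diff trace_sub e1 e2 by simp
    qed
    then have "Z = 0" by (intro nondeg[OF span2]) blast
    then show ?thesis unfolding Z_def by simp
  qed
  have Phi2: "comb \<Theta>2 S1 (\<lambda>n. chi n * b1 n) ** comb \<Theta>2 S2 (\<lambda>n. chi n * b2 n)
              = msc (1 / c (x \<otimes>\<^bsub>G\<^esub> y)) (Pr x ** Pr y)"
    if x: "x \<in> K" and y: "y \<in> K" and S1: "finite S1" "S1 \<subseteq> N" and S2: "finite S2" "S2 \<subseteq> N"
      and b1: "comb \<Theta>2 S1 b1 = Pr x" and b2: "comb \<Theta>2 S2 b2 = Pr y" for x y S1 S2 b1 b2
  proof -
    have xy: "x \<otimes>\<^bsub>G\<^esub> y \<in> K" using clK x y by blast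
    have PP: "Pr x ** Pr y = msc (\<alpha> x y) (Pr (x \<otimes>\<^bsub>G\<^esub> y))"
      using pr x y unfolding proj_rep_def by (simp add: mat_mm)
    define Z where "Z = comb \<Theta>2 S1 (\<lambda>n. chi n * b1 n) ** comb \<Theta>2 S2 (\<lambda>n. chi n * b2 n)
              - msc (1 / c (x \<otimes>\<^bsub>G\<^esub> y)) (Pr x ** Pr y)"
    have "trace (Z ** \<Theta>2 n'') = 0" if n'': "n'' \<in> N" for n''
    proof -
      have "trace ((comb \<Theta>2 S1 (\<lambda>n. chi n * b1 n) ** comb \<Theta>2 S2 (\<lambda>n. chi n * b2 n)) ** \<Theta>2 n'')
          = (\<Sum>n\<in>S1. \<Sum>n'\<in>S2. chi n * b1 n * (chi n' * b2 n') * trace (\<Theta>2 (n \<otimes>\<^bsub>G\<^esub> n' \<otimes>\<^bsub>G\<^esub> n'')))"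
        by (rule trace_comb2[OF hom2 clN S1(2) S2(2) n''])
      also have "\<dots> = (\<Sum>n\<in>S1. \<Sum>n'\<in>S2. b1 n * b2 n' * trace (\<Theta>2 (n \<otimes>\<^bsub>G\<^esub> n' \<otimes>\<^bsub>G\<^esub> n'')) / chi n'')"
      proof (intro sum.cong refl)
        fix n n' assume "n \<in> S1" "n' \<in> S2"
        then have "n \<in> N" "n' \<in> N" using S1 S2 by auto
        then have "chi n * chi n' * trace (\<Theta>2 (n \<otimes>\<^bsub>G\<^esub> n' \<otimes>\<^bsub>G\<^esub> n'')) = trace (\<Theta>2 (n \<otimes>\<^bsub>G\<^esub> n' \<otimes>\<^bsub>G\<^esub> n'')) / chi n''"
          using F2b[OF _ _ n''] by blast
        then show "chi n * b1 n * (chi n' * b2 n') * trace (\<Theta>2 (n \<otimes>\<^bsub>G\<^esub> n' \<otimes>\<^bsub>G\<^esub> n''))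
            = b1 n * b2 n' * trace (\<Theta>2 (n \<otimes>\<^bsub>G\<^esub> n' \<otimes>\<^bsub>G\<^esub> n'')) / chi n''"
          by (rule h2)
      qed
      also have "\<dots> = (\<Sum>n\<in>S1. \<Sum>n'\<in>S2. b1 n * b2 n' * trace (\<Theta>2 (n \<otimes>\<^bsub>G\<^esub> n' \<otimes>\<^bsub>G\<^esub> n''))) / chi n''"
        by (simp add: sum_divide_distrib)
      also have "\<dots> = trace ((comb \<Theta>2 S1 b1 ** comb \<Theta>2 S2 b2) ** \<Theta>2 n'') / chi n''"
        by (simp add: trace_comb2[OF hom2 clN S1(2) S2(2) n''])
      also have "\<dots> = \<alpha> x y * \<theta>h (x \<otimes>\<^bsub>G\<^esub> y \<otimes>\<^bsub>G\<^esub> n'') / chi n''"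
        using b1 b2 PP trPr[OF xy n''] by simp
      also have "\<dots> = \<alpha> x y * \<theta>h (x \<otimes>\<^bsub>G\<^esub> y \<otimes>\<^bsub>G\<^esub> n'') / c (x \<otimes>\<^bsub>G\<^esub> y)"
        by (rule h3[OF R[OF xy n'']])
      finally have e1: "trace ((comb \<Theta>2 S1 (\<lambda>n. chi n * b1 n) ** comb \<Theta>2 S2 (\<lambda>n. chi n * b2 n)) ** \<Theta>2 n'')
          = \<alpha> x y * \<theta>h (x \<otimes>\<^bsub>G\<^esub> y \<otimes>\<^bsub>G\<^esub> n'') / c (x \<otimes>\<^bsub>G\<^esub> y)" .
      have e2: "trace (msc (1 / c (x \<otimes>\<^bsub>G\<^esub> y)) (Pr x ** Pr y) ** \<Theta>2 n'')
          = \<alpha> x y * \<theta>h (x \<otimes>\<^bsub>G\<^esub> y \<otimes>\<^bsub>G\<^esub> n'') / c (x \<otimes>\<^bsub>G\<^esub> y)"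
        using PP trPr[OF xy n''] by simp
      show ?thesis unfolding Z_def mm_diff trace_sub e1 e2 by simp
    qed
    then have "Z = 0" by (intro nondeg[OF span2]) blast
    then show ?thesis unfolding Z_def by simp
  qed
  have cmul: "c (x \<otimes>\<^bsub>G\<^esub> y) = c x * c y" if x: "x \<in> K" and y: "y \<in> K" for x y
  proof -
    obtain S1 b1 where S1: "finite S1" "S1 \<subseteq> N" "Pr x = comb \<Theta>2 S1 b1"
      using span2 unfolding spanA_def by blast
    obtain S2 b2 where S2: "finite S2" "S2 \<subseteq> N" "Pr y = comb \<Theta>2 S2 b2"
      using span2 unfolding spanA_def by blast
    have A: "comb \<Theta>2 S1 (\<lambda>n. chi n * b1 n) = msc (1 / c x) (Pr x)"
      using Phi[OF x S1(1,2)] S1(3) by simp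
    have B: "comb \<Theta>2 S2 (\<lambda>n. chi n * b2 n) = msc (1 / c y) (Pr y)"
      using Phi[OF y S2(1,2)] S2(3) by simp
    have AB: "msc (1 / c x * (1 / c y)) (Pr x ** Pr y) = msc (1 / c (x \<otimes>\<^bsub>G\<^esub> y)) (Pr x ** Pr y)"
      using Phi2[OF x y S1(1,2) S2(1,2) S1(3)[symmetric] S2(3)[symmetric]] A B by (simp add: ac_simps)
    have "invertible (Pr x)" "invertible (Pr y)" using pr x y unfolding proj_rep_def by auto
    then have "Pr x ** Pr y \<noteq> 0" using invertible_mult invertible_nz by blast
    then obtain i j where ij: "(Pr x ** Pr y)$i$j \<noteq> 0" by (auto simp: vec_eq_iff)
    have "(1 / c x * (1 / c y)) * (Pr x ** Pr y)$i$j = (1 / c (x \<otimes>\<^bsub>G\<^esub> y)) * (Pr x ** Pr y)$i$j"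
      using arg_cong[OF AB, of "\<lambda>M. M$i$j"] by simp
    then have "1 / c x * (1 / c y) = 1 / c (x \<otimes>\<^bsub>G\<^esub> y)" using ij by simp
    then show ?thesis using cnz x y by (simp add: field_simps)
  qed
  have numul: "nu (x \<otimes>\<^bsub>G\<^esub> y) = nu x * nu y" if x: "x \<in> K" and y: "y \<in> K" for x y
  proof -
    have xy: "x \<otimes>\<^bsub>G\<^esub> y \<in> K" using clK x y by blast
    have "nu (x \<otimes>\<^bsub>G\<^esub> y) = c (x \<otimes>\<^bsub>G\<^esub> y) * chi (x \<otimes>\<^bsub>G\<^esub> y)" by (rule nuc[OF xy])
    also have "\<dots> = (c x * chi x) * (c y * chi y)" using cmul[OF x y] chimul x y KG by auto
    also have "\<dots> = nu x * nu y" using nuc x y by simp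
    finally show ?thesis .
  qed
  have one1G: "\<one>\<^bsub>G\<^esub> \<otimes>\<^bsub>G\<^esub> \<one>\<^bsub>G\<^esub> = \<one>\<^bsub>G\<^esub>" by simp
  have c1: "c \<one>\<^bsub>G\<^esub> = 1" using cmul[OF oneK oneK] cnz[OF oneK] one1G by simp
  have chi1: "chi \<one>\<^bsub>G\<^esub> = 1" using chimul[of "\<one>\<^bsub>G\<^esub>" "\<one>\<^bsub>G\<^esub>"] chinz[of "\<one>\<^bsub>G\<^esub>"] one1G by simp
  have nuN: "nu n = 1" if n: "n \<in> N" for n
  proof -
    have "nu n = nu (\<one>\<^bsub>G\<^esub> \<otimes>\<^bsub>G\<^esub> n)" using n NG by auto
    also have "\<dots> = nu \<one>\<^bsub>G\<^esub>" by (rule nuF[OF oneK n])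
    also have "\<dots> = 1" using nuc[OF oneK] c1 chi1 by simp
    finally show ?thesis .
  qed
  have chicont: "continuous_map (subtopology T (carrier G)) euclidean chi"
    unfolding chi_def
    using \<psi>_lin \<psi>'_lin \<psi>'nz unfolding lin_char_def by (intro continuous_map_cdivide) auto
  have transl: "openin T {z \<in> topspace T. inv\<^bsub>G\<^esub> x \<otimes>\<^bsub>G\<^esub> z \<in> N}" if x: "x \<in> carrier G" for x
  proof -
    have "continuous_map T (prod_topology T T) (\<lambda>z. (inv\<^bsub>G\<^esub> x, z))"
      using x topG by (intro continuous_map_pairedI) (auto simp: continuous_map_id[unfolded id_def])
    then have "continuous_map T T ((\<lambda>(x, y). x \<otimes>\<^bsub>G\<^esub> y) \<circ> (\<lambda>z. (inv\<^bsub>G\<^esub> x, z)))"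
      using mcont by (rule continuous_map_compose)
    then have "continuous_map T T (\<lambda>z. inv\<^bsub>G\<^esub> x \<otimes>\<^bsub>G\<^esub> z)" by (simp add: o_def)
    then show ?thesis using N_open by (rule openin_continuous_map_preimage)
  qed
  have nucont: "continuous_map (subtopology T K) euclidean nu"
    unfolding continuous_map_def
  proof (intro conjI allI impI)
    show "nu \<in> topspace (subtopology T K) \<rightarrow> topspace euclidean" by simp
    fix U :: "complex set" assume U: "openin euclidean U"
    show "openin (subtopology T K) {x \<in> topspace (subtopology T K). nu x \<in> U}"
    proof (subst openin_subopen, intro ballI)
      fix z assume z: "z \<in> {x \<in> topspace (subtopology T K). nu x \<in> U}"
      then have zK: "z \<in> K" and zU: "nu z \<in> U" by auto
      then have zG: "z \<in> carrier G" using KG by blast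
      define V where "V = {w \<in> topspace T. inv\<^bsub>G\<^esub> z \<otimes>\<^bsub>G\<^esub> w \<in> N}"
      have oV: "openin T V" unfolding V_def by (rule transl[OF zG])
      have wz: "w = z \<otimes>\<^bsub>G\<^esub> (inv\<^bsub>G\<^esub> z \<otimes>\<^bsub>G\<^esub> w)" if "w \<in> carrier G" for w
        using zG that by (simp add: G.m_assoc[symmetric])
      have VK: "V \<subseteq> K"
      proof
        fix w assume "w \<in> V"
        then have "w \<in> carrier G" "inv\<^bsub>G\<^esub> z \<otimes>\<^bsub>G\<^esub> w \<in> N" using topG unfolding V_def by auto
        then show "w \<in> K" using wz xnK[OF zK] by metis
      qed
      have "openin (subtopology T K) V" unfolding openin_subtopology using oV VK by blast
      moreover have "z \<in> V" unfolding V_def using zG topG oneN by simp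
      moreover have "V \<subseteq> {x \<in> topspace (subtopology T K). nu x \<in> U}"
      proof
        fix w assume w: "w \<in> V"
        then have wG: "w \<in> carrier G" and wN: "inv\<^bsub>G\<^esub> z \<otimes>\<^bsub>G\<^esub> w \<in> N" using topG unfolding V_def by auto
        have "nu w = nu (z \<otimes>\<^bsub>G\<^esub> (inv\<^bsub>G\<^esub> z \<otimes>\<^bsub>G\<^esub> w))" using wz[OF wG] by simp
        also have "\<dots> = nu z" by (rule nuF[OF zK wN])
        finally show "w \<in> {x \<in> topspace (subtopology T K). nu x \<in> U}"
          using zU w VK topG wG by auto
      qed
      ultimately show "\<exists>V. openin (subtopology T K) V \<and> z \<in> V \<and> V \<subseteq> {x \<in> topspace (subtopology T K). nu x \<in> U}"
        by blast
    qed
  qed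
  have "nu \<in> Gamma G T K N \<theta>h"
    unfolding Gamma_def lin_char_quot_def lin_char_def
  proof (intro CollectI conjI ballI exI[where x=chi])
    show "\<And>x. x \<in> K \<Longrightarrow> nu x \<noteq> 0" by (rule nunz)
    show "\<And>x y. x \<in> K \<Longrightarrow> y \<in> K \<Longrightarrow> nu (x \<otimes>\<^bsub>G\<^esub> y) = nu x * nu y" by (rule numul)
    show "continuous_map (subtopology T K) euclidean nu" by (rule nucont)
    show "\<And>n. n \<in> N \<Longrightarrow> nu n = 1" by (rule nuN)
    show "\<And>x. x \<in> carrier G \<Longrightarrow> chi x \<noteq> 0" by (rule chinz)
    show "\<And>x y. x \<in> carrier G \<Longrightarrow> y \<in> carrier G \<Longrightarrow> chi (x \<otimes>\<^bsub>G\<^esub> y) = chi x * chi y" by (rule chimul)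
    show "continuous_map (subtopology T (carrier G)) euclidean chi" by (rule chicont)
    show "\<And>x. x \<in> K \<Longrightarrow> \<theta>h x * chi x = \<theta>h x * nu x" by (rule F3)
  qed
  moreover have "\<forall>x\<in>K. \<mu>' x = \<mu> x * nu x" using \<mu>nz by (simp add: nu_def)
  ultimately show ?thesis by blast
qed

end
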